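(* Let $G$ be a graph with a vertex $u$ whose degree $d_u$ is odd. Then $\uparrow^{2}G$ has Laplacian perfect state transfer between $(0,u)$ and $(1,u)$ if and only if $\sigma_u(G)$ consists of even integers.
   Context: All graphs are simple, undirected and unweighted. $\sigma_u(G)$ is the Laplacian eigenvalue support of $u$: the set of distinct eigenvalues $\lambda$ of the Laplacian $L=D-A$ of $G$ with $E_\lambda\mathbf{e}_u\neq\mathbf{0}$, $E_\lambda$ the orthogonal projection onto the $\lambda$-eigenspace. The blow-up $\uparrow^{2}G$ has vertex set $\mathbb{Z}_2\times V(G)$, with $(l,u)\sim(m,v)$ iff $u\sim v$ in $G$. A graph with Laplacian $L$ has Laplacian perfect state transfer between $a,b$ if $\exp(i\tau L)\mathbf{e}_a=\gamma\mathbf{e}_b$ for some $\tau>0$, $\gamma\in\mathbb{C}$. *)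

theory Defs
  imports "HOL-Analysis.Analysis" "HOL-Library.Numeral_Type"
begin

definition simple_graph :: "('a::finite \<Rightarrow> 'a \<Rightarrow> bool) \<Rightarrow> bool" where
  "simple_graph E \<longleftrightarrow> (\<forall>u v. E u v = E v u) \<and> (\<forall>u. \<not> E u u)"

definition degree :: "('a::finite \<Rightarrow> 'a \<Rightarrow> bool) \<Rightarrow> 'a \<Rightarrow> nat" where
  "degree E u = card {v. E u v}"

definition laplacian :: "('a::finite \<Rightarrow> 'a \<Rightarrow> bool) \<Rightarrow> real^'a^'a" where
  "laplacian E = (\<chi> u v. (if u = v then real (degree E u) else 0) - (if E u v then 1 else 0))"

definition lap_eigenspace :: "real^'a^'a \<Rightarrow> real \<Rightarrow> (real^'a) set" where
  "lap_eigenspace L lam = {v. L *v v = lam *\<^sub>R v}"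

definition orth_proj :: "(real^'a) set \<Rightarrow> real^'a \<Rightarrow> real^'a" where
  "orth_proj S x = (THE p. p \<in> S \<and> (\<forall>w\<in>S. (x - p) \<bullet> w = 0))"

definition std_basis :: "'a::finite \<Rightarrow> real^'a" where
  "std_basis u = axis u 1"

definition eig_support :: "('a::finite \<Rightarrow> 'a \<Rightarrow> bool) \<Rightarrow> 'a \<Rightarrow> real set" where
  "eig_support E u = {lam. orth_proj (lap_eigenspace (laplacian E) lam) (std_basis u) \<noteq> 0}"

definition blowup2 :: "('a \<Rightarrow> 'a \<Rightarrow> bool) \<Rightarrow> (2 \<times> 'a \<Rightarrow> 2 \<times> 'a \<Rightarrow> bool)" where
  "blowup2 E = (\<lambda>(l, u) (m, v). E u v)"

definition cmat_exp_apply :: "complex^'n^'n \<Rightarrow> complex^'n \<Rightarrow> complex^'n" where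
  "cmat_exp_apply M x = (\<Sum>k. (1 / of_nat (fact k)) *s (((\<lambda>y. M *v y) ^^ k) x))"

definition cmat_of :: "real^'n^'m \<Rightarrow> complex^'n^'m" where
  "cmat_of A = (\<chi> i j. complex_of_real (A $ i $ j))"

definition cbasis :: "'a::finite \<Rightarrow> complex^'a" where
  "cbasis u = axis u 1"

definition lap_pst :: "('a::finite \<Rightarrow> 'a \<Rightarrow> bool) \<Rightarrow> 'a \<Rightarrow> 'a \<Rightarrow> bool" where
  "lap_pst E a b \<longleftrightarrow> (\<exists>\<tau>::real. \<tau> > 0 \<and> (\<exists>\<gamma>::complex.
      cmat_exp_apply (\<chi> i j. \<i> * complex_of_real \<tau> * (cmat_of (laplacian E) $ i $ j)) (cbasis a) = \<gamma> *s cbasis b))"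

end

theory Submission imports Defs "HOL-Number_Theory.Cong" begin

lemma det_of_int_mat:
  fixes N :: "int^'n^'n"
  shows "det (\<chi> i j. (of_int (N$i$j) :: real)) = of_int (det N)"
  unfolding det_def by (simp add: of_int_sum of_int_prod)

lemma det_cong_diag:
  fixes N :: "int^'n^'n"
  assumes "\<And>i j. [N$i$j = (if i = j then c else 0)] (mod q)"
  shows "[det N = c ^ CARD('n)] (mod q)"
proof -
  let ?D = "(\<chi> i j. if i = j then c else 0) :: int^'n^'n"
  have "det ?D = c ^ CARD('n)"
    by (subst det_diagonal) auto
  moreover have "[det N = det ?D] (mod q)"
    unfolding det_def
    by (intro cong_sum cong_mult cong_refl cong_prod) (use assms in auto)
  ultimately show ?thesis by simp
qed

lemma rat_eig_int_aux:
  fixes K :: "int^'n^'n" and v :: "real^'n" and mu :: real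
  assumes ev: "(\<chi> i j. (of_int (K$i$j) :: real)) *v v = mu *\<^sub>R v" and v0: "v \<noteq> 0"
    and q: "mu * of_int q = of_int c" and cop: "coprime q c" and q0: "q \<noteq> 0"
  shows "\<exists>r::int. mu = of_int r"
proof -
  define N :: "int^'n^'n" where "N = (\<chi> i j. q * K$i$j - (if i = j then c else 0))"
  have NR: "(\<chi> i j. (of_int (N$i$j) :: real)) *v v = 0"
  proof -
    have "(\<chi> i j. (of_int (N$i$j) :: real)) *v v = of_int q *\<^sub>R ((\<chi> i j. (of_int (K$i$j) :: real)) *v v) - of_int c *\<^sub>R v"
    proof -
      have "(\<Sum>j\<in>UNIV. (of_int q * of_int (K$i$j) - (if i = j then of_int c else 0)) * v$j)
          = of_int q * (\<Sum>j\<in>UNIV. of_int (K$i$j) * v$j) - of_int c * (v$i::real)" for i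
      proof -
        have "(\<Sum>j\<in>UNIV. (of_int q * of_int (K$i$j) - (if i = j then of_int c else 0)) * v$j)
           = (\<Sum>j\<in>UNIV. of_int q * (of_int (K$i$j) * v$j)) - (\<Sum>j\<in>UNIV. (if i = j then of_int c * v$j else 0))"
          by (simp add: left_diff_distrib sum_subtractf mult.assoc if_distrib[of "\<lambda>x. x * _"] cong: if_cong)
        also have "\<dots> = of_int q * (\<Sum>j\<in>UNIV. of_int (K$i$j) * v$j) - of_int c * (v$i::real)"
          by (simp add: sum_distrib_left)
        finally show ?thesis .
      qed
      then show ?thesis
        by (simp add: N_def vec_eq_iff matrix_vector_mult_def if_distrib[of real_of_int] cong: if_cong)
    qed
    also have "\<dots> = 0" using q by (simp add: ev algebra_simps)
    finally show ?thesis .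
  qed
  have "det (\<chi> i j. (of_int (N$i$j) :: real)) = 0"
  proof (rule ccontr)
    assume "det (\<chi> i j. (of_int (N$i$j) :: real)) \<noteq> 0"
    then have "inj ((*v) (\<chi> i j. (of_int (N$i$j) :: real)))"
      using inj_matrix_vector_mult invertible_det_nz by blast
    then show False using NR v0 by (metis injD matrix_vector_mult_0_right)
  qed
  then have "det N = 0" by (simp add: det_of_int_mat)
  moreover have "[det N = (- c) ^ CARD('n)] (mod q)"
    by (rule det_cong_diag) (auto simp: N_def cong_iff_dvd_diff)
  ultimately have "q dvd (- c) ^ CARD('n)"
    by (metis cong_0_iff cong_sym)
  moreover have "coprime q ((- c) ^ CARD('n))" using cop by simp
  ultimately have "is_unit q" by (meson coprime_common_divisor dvd_refl)
  then have "q = 1 \<or> q = -1" by auto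
  then show ?thesis
  proof
    assume "q = 1" then show ?thesis using q by (intro exI[of _ c]) simp
  next
    assume "q = -1" then show ?thesis using q by (intro exI[of _ "-c"]) simp
  qed
qed

lemma rat_eig_int:
  fixes K :: "int^'n^'n" and v :: "real^'n" and mu :: real
  assumes ev: "(\<chi> i j. (of_int (K$i$j) :: real)) *v v = mu *\<^sub>R v" and v0: "v \<noteq> 0"
    and q: "mu * of_int q = of_int c" and q0: "q \<noteq> 0"
  shows "\<exists>r::int. mu = of_int r"
proof -
  define g where "g = gcd q c"
  have g0: "g \<noteq> 0" using q0 by (simp add: g_def)
  define q' where "q' = q div g"
  define c' where "c' = c div g"
  have qq: "q = g * q'" and cc: "c = g * c'"
    by (simp_all add: q'_def c'_def g_def)
  have cop: "coprime q' c'" unfolding q'_def c'_def g_def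
    using q0 by (simp add: div_gcd_coprime)
  have q'0: "q' \<noteq> 0" using q0 qq by auto
  have "of_int g * (mu * of_int q') = of_int g * (of_int c' :: real)"
    using q by (simp add: qq cc algebra_simps)
  then have "mu * of_int q' = of_int c'" using g0 by simp
  then show ?thesis using rat_eig_int_aux[OF ev v0 _ cop q'0] by blast
qed

lemma sym_dot:
  fixes A :: "real^'n^'n"
  assumes "transpose A = A"
  shows "(A *v x) \<bullet> y = x \<bullet> (A *v y)"
proof -
  have "A *v x = x v* A" by (metis assms transpose_matrix_vector)
  then show ?thesis by (simp add: dot_lmul_matrix)
qed

lemma quad_aux:
  fixes a b :: real
  assumes "\<And>t. t * a + t^2 * b \<le> 0"
  shows "a = 0"
proof (rule ccontr)
  assume a0: "a \<noteq> 0"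
  define c where "c = \<bar>b\<bar> + 1"
  define t where "t = a / c"
  have pos: "c > 0" by (simp add: c_def)
  have "t * a + t^2 * b = a^2 * (c + b) / c^2"
    unfolding t_def using pos by (simp add: field_simps power2_eq_square)
  then have "t * a + t^2 * b = a^2 * (\<bar>b\<bar> + 1 + b) / (\<bar>b\<bar> + 1)^2"
    by (simp add: c_def)
  moreover have "a^2 * (\<bar>b\<bar> + 1 + b) / (\<bar>b\<bar> + 1)^2 > 0"
    using a0 by (intro divide_pos_pos mult_pos_pos) auto
  ultimately show False using assms[of t] by linarith
qed

lemma eig_span:
  fixes A :: "real^'n^'n"
  assumes sym: "transpose A = A"
  shows "span {v. \<exists>l. A *v v = l *\<^sub>R v} = UNIV"
proof (rule ccontr)
  define Ev where "Ev = {v. \<exists>l. A *v v = l *\<^sub>R v}"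
  define S where "S = span Ev"
  assume "span {v. \<exists>l. A *v v = l *\<^sub>R v} \<noteq> UNIV"
  then obtain x where xS: "x \<notin> S" unfolding S_def Ev_def by auto
  have AS: "A *v w \<in> S" if "w \<in> S" for w
  proof -
    have "Ev \<subseteq> (\<lambda>w. A *v w) -` S"
    proof
      fix v assume "v \<in> Ev"
      then obtain l where "A *v v = l *\<^sub>R v" unfolding Ev_def by auto
      moreover have "l *\<^sub>R v \<in> S" unfolding S_def using \<open>v \<in> Ev\<close>
        by (intro span_mul span_base)
      ultimately show "v \<in> (\<lambda>w. A *v w) -` S" by simp
    qed
    moreover have "subspace ((\<lambda>w. A *v w) -` S)"
      unfolding subspace_def S_def
      by (auto simp: matrix_vector_right_distrib matrix_vector_mult_scaleR intro: span_add span_mul span_zero)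
    ultimately have "S \<subseteq> (\<lambda>w. A *v w) -` S"
      unfolding S_def by (rule span_minimal)
    then show ?thesis using that by auto
  qed
  obtain y z where "y \<in> span S" and zo: "\<And>w. w \<in> span S \<Longrightarrow> orthogonal z w" and "x = y + z"
    using orthogonal_subspace_decomp_exists[of S x] by metis
  then have z0: "z \<noteq> 0" using xS by (auto simp: S_def span_span)
  define W where "W = {z. \<forall>w\<in>S. z \<bullet> w = 0}"
  have zW: "z \<in> W" using zo by (auto simp: W_def orthogonal_def S_def span_base)
  have subW: "subspace W"
    unfolding subspace_def W_def by (auto simp: inner_add_left)
  have AW: "A *v w \<in> W" if "w \<in> W" for w
    using that AS sym_dot[OF sym] by (auto simp: W_def)
  define K where "K = W \<inter> sphere 0 1"
  have cK: "compact K" unfolding K_def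
    by (intro closed_Int_compact closed_subspace subW compact_sphere)
  have nK: "(1 / norm z) *\<^sub>R z \<in> K"
    unfolding K_def using z0 zW subW by (auto simp: subspace_scale)
  have cont: "continuous_on K (\<lambda>x. x \<bullet> (A *v x))"
    by (intro continuous_on_inner continuous_on_id linear_continuous_on
        matrix_vector_mul_bounded_linear)
  obtain x0 where x0K: "x0 \<in> K" and x0max: "\<And>y. y \<in> K \<Longrightarrow> y \<bullet> (A *v y) \<le> x0 \<bullet> (A *v x0)"
    using continuous_attains_sup[OF cK _ cont] nK by blast
  define m where "m = x0 \<bullet> (A *v x0)"
  have x0W: "x0 \<in> W" and nx0: "norm x0 = 1" using x0K by (auto simp: K_def)
  have x0x0: "x0 \<bullet> x0 = 1" using nx0 by (simp add: dot_square_norm)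
  have Q: "y \<bullet> (A *v y) \<le> m * (y \<bullet> y)" if "y \<in> W" for y
  proof (cases "y = 0")
    case True then show ?thesis by simp
  next
    case False
    define y' where "y' = (1 / norm y) *\<^sub>R y"
    have "y' \<in> K" unfolding K_def y'_def using False that subW by (auto simp: subspace_scale)
    then have "y' \<bullet> (A *v y') \<le> m" using x0max m_def by blast
    moreover have "y' \<bullet> (A *v y') = (y \<bullet> (A *v y)) / (norm y)^2"
      unfolding y'_def by (simp add: matrix_vector_mult_scaleR power2_eq_square)
    moreover have "y \<bullet> y = (norm y)^2" by (simp add: dot_square_norm)
    moreover have "(norm y)^2 > 0" using False by simp
    ultimately show ?thesis by (simp add: divide_le_eq mult.commute)
  qed
  define w0 where "w0 = A *v x0 - m *\<^sub>R x0"
  have w0W: "w0 \<in> W" unfolding w0_def using subW x0W AW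
    by (simp add: subspace_diff subspace_scale)
  have ortho: "w0 \<bullet> y = 0" if yW: "y \<in> W" for y
  proof -
    define a where "a = 2 * (w0 \<bullet> y)"
    define b where "b = y \<bullet> (A *v y) - m * (y \<bullet> y)"
    have "t * a + t^2 * b \<le> 0" for t
    proof -
      have "x0 + t *\<^sub>R y \<in> W" using subW x0W yW by (simp add: subspace_add subspace_scale)
      then have "(x0 + t *\<^sub>R y) \<bullet> (A *v (x0 + t *\<^sub>R y)) \<le> m * ((x0 + t *\<^sub>R y) \<bullet> (x0 + t *\<^sub>R y))"
        by (rule Q)
      moreover have "x0 \<bullet> (A *v y) = (A *v x0) \<bullet> y" using sym_dot[OF sym] by simp
      ultimately show ?thesis
        unfolding a_def b_def w0_def using x0x0
        by (simp add: matrix_vector_right_distrib matrix_vector_mult_scaleR inner_add_left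
            inner_add_right inner_diff_left inner_commute[of y x0] inner_commute[of y "A *v x0"]
            m_def power2_eq_square algebra_simps)
    qed
    then have "a = 0" by (rule quad_aux)
    then show ?thesis by (simp add: a_def)
  qed
  have "w0 = 0" using ortho[OF w0W] by simp
  then have "x0 \<in> Ev" unfolding Ev_def w0_def by auto
  then have "x0 \<in> S" unfolding S_def by (rule span_base)
  then have "x0 \<bullet> x0 = 0" using x0W by (auto simp: W_def)
  then show False using x0x0 by simp
qed

lemma eig_decomp:
  fixes A :: "real^'n^'n"
  assumes sym: "transpose A = A"
  shows "\<exists>Lam y. finite Lam \<and> x = (\<Sum>l\<in>Lam. y l) \<and> (\<forall>l\<in>Lam. A *v y l = l *\<^sub>R y l)"
proof -
  define T where "T = {x. \<exists>Lam y. finite Lam \<and> x = (\<Sum>l\<in>Lam. y l) \<and> (\<forall>l\<in>Lam. A *v y l = l *\<^sub>R y l)}"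
  have "{v. \<exists>l. A *v v = l *\<^sub>R v} \<subseteq> T"
  proof
    fix v assume "v \<in> {v. \<exists>l. A *v v = l *\<^sub>R v}"
    then obtain l where "A *v v = l *\<^sub>R v" by auto
    then show "v \<in> T" unfolding T_def by (intro CollectI exI[of _ "{l}"] exI[of _ "\<lambda>_. v"]) auto
  qed
  moreover have "subspace T"
    unfolding subspace_def
  proof (intro conjI ballI allI)
    show "0 \<in> T" unfolding T_def by (intro CollectI exI[of _ "{}"]) auto
  next
    fix x1 x2 assume "x1 \<in> T" "x2 \<in> T"
    then obtain L1 y1 L2 y2 where 1: "finite L1" "x1 = (\<Sum>l\<in>L1. y1 l)" "\<forall>l\<in>L1. A *v y1 l = l *\<^sub>R y1 l"
      and 2: "finite L2" "x2 = (\<Sum>l\<in>L2. y2 l)" "\<forall>l\<in>L2. A *v y2 l = l *\<^sub>R y2 l"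
      unfolding T_def by blast
    define y where "y l = (if l \<in> L1 then y1 l else 0) + (if l \<in> L2 then y2 l else 0)" for l
    have "(\<Sum>l\<in>L1 \<union> L2. y l) = (\<Sum>l\<in>L1 \<union> L2. (if l \<in> L1 then y1 l else 0)) + (\<Sum>l\<in>L1 \<union> L2. (if l \<in> L2 then y2 l else 0))"
      unfolding y_def by (simp add: sum.distrib)
    also have "\<dots> = x1 + x2"
      using 1 2 by (simp add: sum.If_cases Int_absorb1 Int_absorb2 Int_commute)
    finally have "x1 + x2 = (\<Sum>l\<in>L1 \<union> L2. y l)" by simp
    moreover have "\<forall>l\<in>L1 \<union> L2. A *v y l = l *\<^sub>R y l"
      using 1 2 by (auto simp: y_def matrix_vector_right_distrib scaleR_add_right)
    ultimately show "x1 + x2 \<in> T" unfolding T_def using 1 2 by blast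
  next
    fix c x assume "x \<in> T"
    then obtain L y where 1: "finite L" "x = (\<Sum>l\<in>L. y l)" "\<forall>l\<in>L. A *v y l = l *\<^sub>R y l"
      unfolding T_def by blast
    then have "c *\<^sub>R x = (\<Sum>l\<in>L. c *\<^sub>R y l)" by (simp add: scaleR_sum_right)
    moreover have "\<forall>l\<in>L. A *v (c *\<^sub>R y l) = l *\<^sub>R (c *\<^sub>R y l)"
      using 1 by (simp add: matrix_vector_mult_scaleR)
    ultimately show "c *\<^sub>R x \<in> T" unfolding T_def using 1 by blast
  qed
  ultimately have "span {v. \<exists>l. A *v v = l *\<^sub>R v} \<subseteq> T" by (rule span_minimal)
  then show ?thesis using eig_span[OF sym] unfolding T_def by auto
qed

lemma eig_orth:
  fixes A :: "real^'n^'n"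
  assumes sym: "transpose A = A" and "A *v v = a *\<^sub>R v" "A *v w = b *\<^sub>R w" "a \<noteq> b"
  shows "v \<bullet> w = 0"
proof -
  have "a * (v \<bullet> w) = b * (v \<bullet> w)"
    using sym_dot[OF sym, of v w] assms(2,3) by simp
  then show ?thesis using assms(4) by simp
qed

lemma orth_proj_eq:
  assumes "p \<in> S" "\<And>w. w \<in> S \<Longrightarrow> (x - p) \<bullet> w = 0"
    and sub: "\<And>a b. a \<in> S \<Longrightarrow> b \<in> S \<Longrightarrow> a - b \<in> S"
  shows "orth_proj S x = p"
  unfolding orth_proj_def
proof (rule the_equality)
  show "p \<in> S \<and> (\<forall>w\<in>S. (x - p) \<bullet> w = 0)" using assms by auto
next
  fix p' assume p': "p' \<in> S \<and> (\<forall>w\<in>S. (x - p') \<bullet> w = 0)"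
  then have d: "p - p' \<in> S" using sub assms(1) by auto
  have "(p - p') \<bullet> (p - p') = (x - p') \<bullet> (p - p') - (x - p) \<bullet> (p - p')"
    by (simp add: inner_diff_left)
  also have "\<dots> = 0" using p' assms(2)[OF d] d by simp
  finally show "p' = p" by simp
qed

lemma vec_sums_scalar:
  fixes f :: "nat \<Rightarrow> complex" and w :: "complex^'n"
  assumes "f sums s"
  shows "(\<lambda>k. f k *s w) sums (s *s w)"
  unfolding sums_def
proof (rule vec_tendstoI)
  fix i
  have "(\<lambda>k. f k * w $ i) sums (s * w $ i)" using assms by (rule sums_mult2)
  then show "((\<lambda>n. (\<Sum>k<n. f k *s w) $ i) \<longlongrightarrow> (s *s w) $ i) sequentially"
    by (simp add: sums_def vector_scalar_mult_def)
qed

lemma mvec_sum: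
  fixes M :: "complex^'n^'n"
  shows "M *v (\<Sum>j\<in>J. w j) = (\<Sum>j\<in>J. M *v w j)"
  by (induction J rule: infinite_finite_induct) (auto simp: matrix_vector_right_distrib)

lemma funpow_mvec_sum:
  fixes M :: "complex^'n^'n"
  shows "((\<lambda>y. M *v y) ^^ k) (\<Sum>j\<in>J. w j) = (\<Sum>j\<in>J. ((\<lambda>y. M *v y) ^^ k) (w j))"
  by (induction k) (auto simp: mvec_sum)

lemma funpow_mvec_add:
  fixes M :: "complex^'n^'n"
  shows "((\<lambda>y. M *v y) ^^ k) (a + b) = ((\<lambda>y. M *v y) ^^ k) a + ((\<lambda>y. M *v y) ^^ k) b"
  by (induction k) (auto simp: matrix_vector_right_distrib)

lemma funpow_mvec_eig:
  fixes M :: "complex^'n^'n"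
  assumes "M *v w = c *s w"
  shows "((\<lambda>y. M *v y) ^^ k) w = c ^ k *s w"
  by (induction k) (auto simp: vector_scalar_commute assms vector_smult_assoc mult.commute)

lemma exp_term_sums:
  fixes M :: "complex^'n^'n"
  assumes "M *v w = c *s w"
  shows "(\<lambda>k. (1 / of_nat (fact k)) *s (((\<lambda>y. M *v y) ^^ k) w)) sums (exp c *s w)"
proof -
  have "(\<lambda>k. (c ^ k /\<^sub>R fact k) *s w) sums (exp c *s w)"
    by (rule vec_sums_scalar[OF exp_converges])
  moreover have "(c ^ k /\<^sub>R fact k) *s w = (1 / of_nat (fact k)) *s (((\<lambda>y. M *v y) ^^ k) w)" for k
    by (simp add: funpow_mvec_eig[OF assms] vector_smult_assoc scaleR_conv_of_real divide_inverse mult.commute)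
  ultimately show ?thesis by simp
qed

lemma smult_sum:
  fixes c :: "'b::comm_ring_1"
  shows "c *s (\<Sum>j\<in>J. w j) = (\<Sum>j\<in>J. c *s w j)"
  by (simp add: vec_eq_iff vector_scalar_mult_def sum_distrib_left)

lemma cmat_exp_decomp:
  fixes M :: "complex^'n^'n"
  assumes "finite J" "\<And>j. j \<in> J \<Longrightarrow> M *v w j = c j *s w j" "M *v z = c0 *s z"
  shows "cmat_exp_apply M (z + (\<Sum>j\<in>J. w j)) = exp c0 *s z + (\<Sum>j\<in>J. exp (c j) *s w j)"
proof -
  let ?T = "\<lambda>k x. (1 / of_nat (fact k)) *s (((\<lambda>y. M *v y) ^^ k) x) :: complex^'n"
  have "(\<lambda>k. ?T k z + (\<Sum>j\<in>J. ?T k (w j))) sums (exp c0 *s z + (\<Sum>j\<in>J. exp (c j) *s w j))"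
    by (intro sums_add sums_sum exp_term_sums assms)
  moreover have "?T k (z + (\<Sum>j\<in>J. w j)) = ?T k z + (\<Sum>j\<in>J. ?T k (w j))" for k
    by (simp add: funpow_mvec_add funpow_mvec_sum vector_add_ldistrib smult_sum)
  ultimately show ?thesis unfolding cmat_exp_apply_def by (simp add: sums_iff)
qed

lemma UNIV_2: "(UNIV :: 2 set) = {0, 1}"
proof -
  have "x = 0 \<or> x = 1" for x :: 2
    using exhaust_2[of x] by auto
  then show ?thesis by auto
qed

lemma two_ne0: "(x::2) \<noteq> 0 \<Longrightarrow> x = 1"
  using UNIV_2 by auto

lemma sum_2: "(\<Sum>m\<in>(UNIV::2 set). f m) = f 0 + f 1"
  by (simp add: UNIV_2)

lemma sum_pair: "(\<Sum>p\<in>(UNIV::(2 \<times> 'b::finite) set). f p) = (\<Sum>y\<in>UNIV. f (0, y) + f (1, y))"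
proof -
  have "(\<Sum>p\<in>(UNIV::(2 \<times> 'b) set). f p) = (\<Sum>m\<in>UNIV. \<Sum>y\<in>UNIV. f (m, y))"
    by (simp add: sum.cartesian_product)
  also have "\<dots> = (\<Sum>y\<in>UNIV. \<Sum>m\<in>UNIV. f (m, y))" by (rule sum.swap)
  also have "\<dots> = (\<Sum>y\<in>UNIV. f (0, y) + f (1, y))" by (simp add: sum_2)
  finally show ?thesis .
qed

lemma lap_sym:
  assumes "simple_graph E"
  shows "transpose (laplacian E) = laplacian E"
  using assms unfolding simple_graph_def laplacian_def transpose_def
  by (auto simp: vec_eq_iff)

lemma lap_apply:
  "(laplacian F *v w) $ i = real (degree F i) * w $ i - (\<Sum>j\<in>UNIV. if F i j then w $ j else 0)"
proof -
  have "(laplacian F *v w) $ i = (\<Sum>j\<in>UNIV. (if i = j then real (degree F i) * w $ j else 0))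
        - (\<Sum>j\<in>UNIV. if F i j then w $ j else 0)"
    unfolding laplacian_def matrix_vector_mult_def
    by (simp add: left_diff_distrib sum_subtractf if_distrib[of "\<lambda>x. x * _"] cong: if_cong)
  then show ?thesis by simp
qed

lemma deg_blowup: "degree (blowup2 E) (l, x) = 2 * degree E x"
proof -
  have "{p. blowup2 E (l, x) p} = (UNIV :: 2 set) \<times> {y. E x y}"
    by (auto simp: blowup2_def)
  then show ?thesis unfolding degree_def by (simp add: card_cartesian_product)
qed

lemma lap2_apply:
  "(laplacian (blowup2 E) *v w) $ (l, x) =
     2 * real (degree E x) * w $ (l, x) - (\<Sum>y\<in>UNIV. if E x y then w $ (0, y) + w $ (1, y) else 0)"
proof -
  have "(\<Sum>p\<in>UNIV. if blowup2 E (l, x) p then w $ p else 0)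
      = (\<Sum>y\<in>UNIV. (if E x y then w $ (0, y) else 0) + (if E x y then w $ (1, y) else 0))"
    by (subst sum_pair) (simp add: blowup2_def)
  also have "\<dots> = (\<Sum>y\<in>UNIV. if E x y then w $ (0, y) + w $ (1, y) else 0)"
    by (rule sum.cong) auto
  finally show ?thesis by (simp add: lap_apply deg_blowup)
qed

definition lift :: "real^'b \<Rightarrow> real^(2 \<times> 'b)" where
  "lift v = (\<chi> p. v $ snd p)"

definition wmv :: "'b::finite \<Rightarrow> real^(2 \<times> 'b)" where
  "wmv u = (\<chi> p. if snd p = u then (if fst p = 0 then 1 else -1) else 0)"

definition cvec :: "real^'b \<Rightarrow> complex^'b" where
  "cvec v = (\<chi> i. complex_of_real (v $ i))"

definition cdot :: "complex^'b \<Rightarrow> complex^'b \<Rightarrow> complex" where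
  "cdot x y = (\<Sum>i\<in>UNIV. x $ i * y $ i)"

lemma lift_eig:
  assumes "laplacian E *v v = a *\<^sub>R v"
  shows "laplacian (blowup2 E) *v lift v = (2 * a) *\<^sub>R lift v"
proof -
  have "(laplacian E *v v) $ x = a * v $ x" for x using assms by simp
  then have h: "real (degree E x) * v $ x - (\<Sum>j\<in>UNIV. if E x j then v $ j else 0) = a * v $ x" for x
    by (simp add: lap_apply)
  have "(laplacian (blowup2 E) *v lift v) $ (l, x) = ((2 * a) *\<^sub>R lift v) $ (l, x)" for l x
  proof -
    have "(\<Sum>y\<in>UNIV. if E x y then lift v $ (0, y) + lift v $ (1, y) else 0)
        = 2 * (\<Sum>j\<in>UNIV. if E x j then v $ j else 0)"
      by (simp add: lift_def sum_distrib_left if_distrib[of "\<lambda>x. 2 * x"] cong: if_cong)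
    then show ?thesis using h[of x] by (simp add: lap2_apply lift_def algebra_simps cong: if_cong)
  qed
  then show ?thesis by (simp add: vec_eq_iff split_paired_all)
qed

lemma wmv_eig:
  "laplacian (blowup2 E) *v wmv u = (2 * real (degree E u)) *\<^sub>R wmv u"
proof -
  have "(laplacian (blowup2 E) *v wmv u) $ (l, x) = ((2 * real (degree E u)) *\<^sub>R wmv u) $ (l, x)" for l x
  proof -
    have z: "(\<Sum>y\<in>UNIV. if E x y then wmv u $ (0,y) + wmv u $ (1,y) else 0) = 0"
      by (intro sum.neutral) (simp add: wmv_def)
    show ?thesis by (simp add: lap2_apply z) (simp add: wmv_def)
  qed
  then show ?thesis by (simp add: vec_eq_iff split_paired_all)
qed

lemma lift_inner: "lift a \<bullet> lift b = 2 * (a \<bullet> b)"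
  by (simp add: inner_vec_def sum_pair lift_def sum_distrib_left)

lemma lift_wmv: "lift a \<bullet> wmv u = 0"
  by (simp add: inner_vec_def sum_pair lift_def wmv_def if_distrib cong: if_cong)

lemma wmv_wmv: "wmv u \<bullet> wmv u = 2"
  by (simp add: inner_vec_def sum_pair wmv_def if_distrib cong: if_cong)

lemma lift_basis: "lift a \<bullet> std_basis (l, u) = a $ u"
  by (simp add: std_basis_def inner_axis lift_def)

lemma wmv_basis1: "wmv u \<bullet> std_basis (1, u) = -1"
  by (simp add: std_basis_def inner_axis wmv_def)

lemma basis_inner: "a \<bullet> std_basis u = a $ u"
  by (simp add: std_basis_def inner_axis)

lemma lift_add: "lift (a + b) = lift a + lift b"
  by (simp add: lift_def vec_eq_iff)

lemma lift_zero [simp]: "lift 0 = 0"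
  by (simp add: lift_def vec_eq_iff)

lemma lift_sum: "lift (\<Sum>j\<in>J. w j) = (\<Sum>j\<in>J. lift (w j))"
  by (induction J rule: infinite_finite_induct) (auto simp: lift_add)

lemma lift_scale: "lift (c *\<^sub>R a) = c *\<^sub>R lift a"
  by (simp add: lift_def vec_eq_iff)

lemma basis0: "std_basis (0, u) = (1/2) *\<^sub>R lift (std_basis u) + (1/2) *\<^sub>R wmv u"
  by (auto simp: vec_eq_iff std_basis_def lift_def wmv_def axis_def split_paired_all)

lemma basis1: "std_basis (1, u) = (1/2) *\<^sub>R lift (std_basis u) - (1/2) *\<^sub>R wmv u"
  by (auto dest: two_ne0 simp: vec_eq_iff std_basis_def lift_def wmv_def axis_def split_paired_all)

lemma cvec_add: "cvec (a + b) = cvec a + cvec b"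
  by (simp add: cvec_def vec_eq_iff)

lemma cvec_diff: "cvec (a - b) = cvec a - cvec b"
  by (simp add: cvec_def vec_eq_iff)

lemma cvec_zero [simp]: "cvec 0 = 0"
  by (simp add: cvec_def vec_eq_iff)

lemma cvec_sum: "cvec (\<Sum>j\<in>J. w j) = (\<Sum>j\<in>J. cvec (w j))"
  by (induction J rule: infinite_finite_induct) (auto simp: cvec_add)

lemma cvec_scale: "cvec (c *\<^sub>R a) = complex_of_real c *s cvec a"
  by (simp add: cvec_def vec_eq_iff vector_scalar_mult_def)

lemma cbasis_cvec: "cbasis p = cvec (std_basis p)"
  by (simp add: cbasis_def std_basis_def cvec_def vec_eq_iff axis_def)

lemma cvec_mult:
  "(\<chi> i j. \<i> * complex_of_real t * (cmat_of L $ i $ j)) *v cvec w = (\<i> * complex_of_real t) *s cvec (L *v w)"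
  by (simp add: cvec_def cmat_of_def vec_eq_iff matrix_vector_mult_def vector_scalar_mult_def
      sum_distrib_left mult.assoc)

lemma cdot_cvec: "cdot (cvec a) (cvec b) = complex_of_real (a \<bullet> b)"
  by (simp add: cdot_def cvec_def inner_vec_def)

lemma cdot_add: "cdot x (y + z) = cdot x y + cdot x z"
  by (simp add: cdot_def distrib_left sum.distrib)

lemma cdot_diff: "cdot x (y - z) = cdot x y - cdot x z"
  by (simp add: cdot_def right_diff_distrib sum_subtractf)

lemma cdot_smult: "cdot x (c *s y) = c * cdot x y"
  by (simp add: cdot_def vector_scalar_mult_def sum_distrib_left mult_ac)

lemma cdot_zero [simp]: "cdot x 0 = 0"
  by (simp add: cdot_def)

lemma cdot_sum: "cdot x (\<Sum>j\<in>J. w j) = (\<Sum>j\<in>J. cdot x (w j))"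
  by (induction J rule: infinite_finite_induct) (auto simp: cdot_add)

lemma Mcvec_eig:
  assumes "L *v w = r *\<^sub>R w"
  shows "(\<chi> i j. \<i> * complex_of_real t * (cmat_of L $ i $ j)) *v cvec w
        = (\<i> * complex_of_real t * complex_of_real r) *s cvec w"
  by (simp add: cvec_mult assms cvec_scale vector_smult_assoc)

lemma ones_eig: "laplacian E *v (\<chi> i. 1) = 0 *\<^sub>R (\<chi> i. 1)"
proof -
  have "(\<Sum>j\<in>UNIV. if E i j then (1::real) else 0) = real (card {j. E i j})" for i
    by (subst sum.inter_filter[symmetric]) auto
  then show ?thesis by (simp add: vec_eq_iff lap_apply degree_def cong: if_cong)
qed

lemma lap_int: "laplacian E = (\<chi> i j. of_int ((\<chi> i j. (if i = j then int (degree E i) else 0) - (if E i j then 1 else 0) :: int^'a^'a) $ i $ j))"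
  by (simp add: laplacian_def vec_eq_iff)

lemma exp_i_eq_1:
  assumes "exp (\<i> * complex_of_real x) = 1"
  shows "\<exists>n::int. x = 2 * of_int n * pi"
  using assms by (auto simp: exp_eq_1)

lemma exp_i_eq_m1:
  assumes "exp (\<i> * complex_of_real x) = -1"
  shows "\<exists>n::int. x = (2 * of_int n - 1) * pi"
proof -
  have "exp (\<i> * complex_of_real (x + pi)) = exp (\<i> * complex_of_real x) * exp (\<i> * complex_of_real pi)"
    by (simp add: distrib_left exp_add)
  then have "exp (\<i> * complex_of_real (x + pi)) = 1" using assms by simp
  then obtain n :: int where "x + pi = 2 * of_int n * pi" using exp_i_eq_1 by blast
  then show ?thesis by (intro exI[of _ n]) (simp add: algebra_simps)
qed

lemma exp_i_even: "exp (\<i> * complex_of_real (2 * of_int k * pi)) = 1"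
  by (simp add: exp_eq_1)

lemma exp_i_odd:
  assumes "odd n"
  shows "exp (\<i> * complex_of_real (real n * pi)) = -1"
proof -
  obtain j where n: "n = 2 * j + 1" using assms oddE by blast
  have "exp (\<i> * complex_of_real (real n * pi)) = exp (\<i> * complex_of_real (2 * of_int (int j) * pi)) * exp (\<i> * complex_of_real pi)"
    by (simp add: n distrib_left distrib_right exp_add)
  then show ?thesis by (simp only: exp_i_even exp_pi_i') simp
qed

theorem corollary4:
  fixes E :: "'a::finite \<Rightarrow> 'a \<Rightarrow> bool" and u :: 'a
  assumes "simple_graph E"
    and "odd (degree E u)"
  shows "lap_pst (blowup2 E) (0, u) (1, u) \<longleftrightarrow>
         (\<forall>lam\<in>eig_support E u. \<exists>k::int. lam = 2 * of_int k)"
proof -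
  let ?L = "laplacian E"
  let ?L2 = "laplacian (blowup2 E)"
  define d where "d = real (degree E u)"
  define M where "M t = (\<chi> i j. \<i> * complex_of_real t * (cmat_of ?L2 $ i $ j))" for t
  have sym: "transpose ?L = ?L" using assms(1) by (rule lap_sym)
  obtain Lam y where finL: "finite Lam" and dec: "std_basis u = (\<Sum>l\<in>Lam. y l)"
    and eig: "\<forall>l\<in>Lam. ?L *v y l = l *\<^sub>R y l"
    using eig_decomp[OF sym, of "std_basis u"] by blast
  have orth: "y l \<bullet> w = 0" if "l \<in> Lam" "?L *v w = m *\<^sub>R w" "m \<noteq> l" for l w m
    using eig_orth[OF sym, of "y l" l w m] eig that by auto
  have proj: "orth_proj (lap_eigenspace ?L m) (std_basis u) = (if m \<in> Lam then y m else 0)" for m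
  proof (rule orth_proj_eq)
    show "(if m \<in> Lam then y m else 0) \<in> lap_eigenspace ?L m"
      using eig by (auto simp: lap_eigenspace_def)
    show "a - b \<in> lap_eigenspace ?L m" if "a \<in> lap_eigenspace ?L m" "b \<in> lap_eigenspace ?L m" for a b
      using that by (simp add: lap_eigenspace_def matrix_vector_mult_diff_distrib scaleR_diff_right)
    fix w assume "w \<in> lap_eigenspace ?L m"
    then have w: "?L *v w = m *\<^sub>R w" by (simp add: lap_eigenspace_def)
    have "std_basis u - (if m \<in> Lam then y m else 0) = (\<Sum>l\<in>Lam - {m}. y l)"
      using finL by (simp add: dec sum_diff1)
    moreover have "(\<Sum>l\<in>Lam - {m}. y l) \<bullet> w = 0"
      unfolding inner_sum_left using orth w by (intro sum.neutral) auto
    ultimately show "(std_basis u - (if m \<in> Lam then y m else 0)) \<bullet> w = 0" by simp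
  qed
  have supp: "eig_support E u = {m \<in> Lam. y m \<noteq> 0}"
    by (auto simp: eig_support_def proj)
  have yy: "y m \<bullet> y l = 0" if "m \<in> Lam" "l \<in> Lam" "l \<noteq> m" for m l
    using orth[of l "y m" m] that eig by (simp add: inner_commute)
  have yu: "(y m) $ u = y m \<bullet> y m" if m: "m \<in> Lam" for m
  proof -
    have "(y m) $ u = y m \<bullet> std_basis u" by (simp add: basis_inner)
    also have "\<dots> = (\<Sum>l\<in>Lam. y m \<bullet> y l)" by (simp add: dec inner_sum_right)
    also have "\<dots> = y m \<bullet> y m + (\<Sum>l\<in>Lam - {m}. y m \<bullet> y l)"
      by (rule sum.remove[OF finL m])
    also have "(\<Sum>l\<in>Lam - {m}. y m \<bullet> y l) = 0"
      using yy m by (intro sum.neutral) auto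
    finally show ?thesis by simp
  qed
  have zero_supp: "0 \<in> Lam \<and> y 0 \<noteq> 0"
  proof (rule ccontr)
    define ones :: "real^'a" where "ones = (\<chi> i. 1)"
    assume nz: "\<not> (0 \<in> Lam \<and> y 0 \<noteq> 0)"
    have "ones \<bullet> std_basis u = 1" by (simp add: basis_inner ones_def)
    moreover have "ones \<bullet> std_basis u = (\<Sum>l\<in>Lam. ones \<bullet> y l)" by (simp add: dec inner_sum_right)
    moreover have "ones \<bullet> y l = 0" if "l \<in> Lam" for l
    proof (cases "l = 0")
      case True then show ?thesis using nz that by auto
    next
      case False then show ?thesis
        using orth[of l ones 0] that ones_eig[of E] by (simp add: ones_def inner_commute)
    qed
    ultimately show False by simp
  qed
  define Z where "Z = cvec ((1/2) *\<^sub>R wmv u)"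
  define W where "W l = cvec ((1/2) *\<^sub>R lift (y l))" for l
  have expf: "cmat_exp_apply (M t) (cbasis (0, u)) =
      exp (\<i> * complex_of_real t * complex_of_real (2 * d)) *s Z
      + (\<Sum>l\<in>Lam. exp (\<i> * complex_of_real t * complex_of_real (2 * l)) *s W l)" for t
  proof -
    have "cbasis (0, u) = Z + (\<Sum>l\<in>Lam. W l)"
      by (simp add: Z_def W_def cbasis_cvec basis0 dec lift_sum scaleR_sum_right cvec_add cvec_sum add.commute)
    moreover have "M t *v W l = (\<i> * complex_of_real t * complex_of_real (2 * l)) *s W l" if "l \<in> Lam" for l
    proof -
      have "?L2 *v ((1/2) *\<^sub>R lift (y l)) = (2 * l) *\<^sub>R ((1/2) *\<^sub>R lift (y l))"
        using lift_eig[of E "y l" l] eig that by (simp add: matrix_vector_mult_scaleR)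
      then show ?thesis unfolding M_def W_def by (rule Mcvec_eig)
    qed
    moreover have "M t *v Z = (\<i> * complex_of_real t * complex_of_real (2 * d)) *s Z"
    proof -
      have "?L2 *v ((1/2) *\<^sub>R wmv u) = (2 * d) *\<^sub>R ((1/2) *\<^sub>R wmv u)"
        using wmv_eig[of E u] by (simp add: matrix_vector_mult_scaleR d_def)
      then show ?thesis unfolding M_def Z_def by (rule Mcvec_eig)
    qed
    ultimately show ?thesis by (simp add: cmat_exp_decomp[OF finL])
  qed
  show ?thesis
  proof
    assume "lap_pst (blowup2 E) (0, u) (1, u)"
    then obtain t g where t: "t > 0" and eq: "cmat_exp_apply (M t) (cbasis (0, u)) = g *s cbasis (1, u)"
      unfolding lap_pst_def M_def by blast
    have ceq: "cdot x (exp (\<i> * complex_of_real t * complex_of_real (2 * d)) *s Z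
      + (\<Sum>l\<in>Lam. exp (\<i> * complex_of_real t * complex_of_real (2 * l)) *s W l)) = g * cdot x (cbasis (1, u))" for x
      using eq expf by (simp add: cdot_smult)
    have ev: "exp (\<i> * complex_of_real t * complex_of_real (2 * m)) = g" if m: "m \<in> Lam" "y m \<noteq> 0" for m
    proof -
      let ?x = "cvec (lift (y m))"
      have "cdot ?x (\<Sum>l\<in>Lam. exp (\<i> * complex_of_real t * complex_of_real (2 * l)) *s W l)
          = (\<Sum>l\<in>Lam. exp (\<i> * complex_of_real t * complex_of_real (2 * l)) * complex_of_real (y m \<bullet> y l))"
        by (simp add: cdot_sum cdot_smult W_def cdot_cvec lift_scale lift_inner)
      also have "\<dots> = exp (\<i> * complex_of_real t * complex_of_real (2 * m)) * complex_of_real (y m \<bullet> y m)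
          + (\<Sum>l\<in>Lam - {m}. exp (\<i> * complex_of_real t * complex_of_real (2 * l)) * complex_of_real (y m \<bullet> y l))"
        by (rule sum.remove[OF finL m(1)])
      also have "(\<Sum>l\<in>Lam - {m}. exp (\<i> * complex_of_real t * complex_of_real (2 * l)) * complex_of_real (y m \<bullet> y l)) = 0"
        using yy m by (intro sum.neutral) auto
      finally have 1: "cdot ?x (\<Sum>l\<in>Lam. exp (\<i> * complex_of_real t * complex_of_real (2 * l)) *s W l)
          = exp (\<i> * complex_of_real t * complex_of_real (2 * m)) * complex_of_real (y m \<bullet> y m)" by simp
      have 2: "cdot ?x Z = 0" by (simp add: Z_def cdot_cvec lift_wmv)
      have 3: "cdot ?x (cbasis (1, u)) = complex_of_real (y m \<bullet> y m)"
        by (simp add: cbasis_cvec cdot_cvec lift_basis yu m)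
      have A: "cdot ?x (exp (\<i> * complex_of_real t * complex_of_real (2 * d)) *s Z
      + (\<Sum>l\<in>Lam. exp (\<i> * complex_of_real t * complex_of_real (2 * l)) *s W l))
          = exp (\<i> * complex_of_real t * complex_of_real (2 * m)) * complex_of_real (y m \<bullet> y m)"
        using 1 2 by (simp add: cdot_add cdot_smult)
      have "exp (\<i> * complex_of_real t * complex_of_real (2 * m)) * complex_of_real (y m \<bullet> y m)
           = g * complex_of_real (y m \<bullet> y m)"
        using A ceq[of ?x] 3 by metis
      moreover have "y m \<bullet> y m \<noteq> 0" using m by simp
      ultimately show ?thesis by (metis mult_cancel_right of_real_eq_0_iff)
    qed
    have g1: "g = 1" using ev[of 0] zero_supp by simp
    have ed: "exp (\<i> * complex_of_real t * complex_of_real (2 * d)) = -1"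
    proof -
      let ?x = "cvec (wmv u)"
      have 1: "cdot ?x (\<Sum>l\<in>Lam. exp (\<i> * complex_of_real t * complex_of_real (2 * l)) *s W l) = 0"
        by (simp add: cdot_sum cdot_smult W_def cdot_cvec lift_scale inner_commute[of "wmv u"] lift_wmv)
      have 2: "cdot ?x Z = 1" by (simp add: Z_def cdot_cvec wmv_wmv)
      have 3: "cdot ?x (cbasis (1, u)) = -1"
        by (simp add: cbasis_cvec cdot_cvec wmv_basis1)
      show ?thesis using ceq[of ?x] 1 2 3 g1 by (simp add: cdot_add cdot_smult)
    qed
    obtain j :: int where j: "t * (2 * d) = (2 * of_int j - 1) * pi"
      using exp_i_eq_m1[of "t * (2 * d)"] ed by (auto simp: mult.assoc)
    show "\<forall>lam\<in>eig_support E u. \<exists>k::int. lam = 2 * of_int k"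
    proof
      fix m assume "m \<in> eig_support E u"
      then have m: "m \<in> Lam" "y m \<noteq> 0" by (auto simp: supp)
      obtain n :: int where n: "t * (2 * m) = 2 * of_int n * pi"
        using exp_i_eq_1[of "t * (2 * m)"] ev[OF m] g1 by (auto simp: mult.assoc)
      have "m * of_int (2 * j - 1) * pi = of_int (2 * int (degree E u) * n) * pi"
      proof -
        have "m * of_int (2 * j - 1) * pi = m * (t * (2 * d))" using j by simp
        also have "\<dots> = d * (t * (2 * m))" by (simp add: algebra_simps)
        also have "\<dots> = of_int (2 * int (degree E u) * n) * pi" using n by (simp add: d_def)
        finally show ?thesis .
      qed
      then have q: "m * of_int (2 * j - 1) = of_int (2 * int (degree E u) * n)" by simp
      have eigm: "(\<chi> i j. (of_int ((\<chi> i j. (if i = j then int (degree E i) else 0) - (if E i j then 1 else 0) :: int^'a^'a) $ i $ j) :: real)) *v y m = m *\<^sub>R y m"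
      proof -
        have "?L *v y m = m *\<^sub>R y m" using eig m by auto
        then show ?thesis by (subst (asm) lap_int)
      qed
      have q0: "2 * j - 1 \<noteq> 0" by presburger
      obtain r :: int where r: "m = of_int r" using rat_eig_int[OF eigm m(2) q q0] by blast
      then have "r * (2 * j - 1) = 2 * int (degree E u) * n" using q
        by (metis of_int_eq_iff of_int_mult)
      then have "even (r * (2 * j - 1))" by simp
      then have "even r" by simp
      then obtain k where "r = 2 * k" by blast
      then show "\<exists>k::int. m = 2 * of_int k" using r by auto
    qed
  next
    assume all: "\<forall>lam\<in>eig_support E u. \<exists>k::int. lam = 2 * of_int k"
    have td: "exp (\<i> * complex_of_real (pi / 2) * complex_of_real (2 * d)) = -1"
      using exp_i_odd[OF assms(2)] by (simp add: d_def mult.assoc mult.commute)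
    have tl: "exp (\<i> * complex_of_real (pi / 2) * complex_of_real (2 * l)) *s W l = W l" if "l \<in> Lam" for l
    proof (cases "y l = 0")
      case True then show ?thesis by (simp add: W_def)
    next
      case False
      then have "l \<in> eig_support E u" using that supp by auto
      then obtain k :: int where "l = 2 * of_int k" using all by blast
      then have "exp (\<i> * complex_of_real (pi / 2) * complex_of_real (2 * l)) = 1"
        using exp_i_even[of k] by (simp add: mult.assoc mult.left_commute mult.commute)
      then show ?thesis by simp
    qed
    have "cmat_exp_apply (M (pi / 2)) (cbasis (0, u)) = - Z + (\<Sum>l\<in>Lam. W l)"
      unfolding expf td using tl by simp
    also have "\<dots> = cbasis (1, u)"
      by (simp add: Z_def W_def cbasis_cvec basis1 dec lift_sum scaleR_sum_right cvec_diff cvec_sum)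
    finally have "cmat_exp_apply (M (pi / 2)) (cbasis (0, u)) = 1 *s cbasis (1, u)" by simp
    then show "lap_pst (blowup2 E) (0, u) (1, u)"
      unfolding lap_pst_def M_def by (intro exI[of _ "pi / 2"] conjI exI[of _ 1]) auto
  qed
qed

end
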